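(* Let $G$ be a $\mathrm{sat}(n,K_{2,3})$-graph with $\delta(G) = 2$. Let $A$ be the set of vertices of degree $2$ whose two neighbors are adjacent, and let $B$ be the set of vertices of degree $2$ whose two neighbors have exactly one common neighbor. If $A\cap B \neq \emptyset$, then $e(G) \geq 2n-3$.
   Context: All graphs are finite and simple. A graph $G$ is $K_{2,3}$-saturated if $G$ contains no subgraph isomorphic to $K_{2,3}$, but for every pair of nonadjacent vertices $u,v$, the graph $G+uv$ contains a subgraph isomorphic to $K_{2,3}$. $\mathrm{sat}(n,K_{2,3})$ is the minimum number of edges of a $K_{2,3}$-saturated graph on $n$ vertices, and a $\mathrm{sat}(n,K_{2,3})$-graph is a $K_{2,3}$-saturated graph on $n$ vertices with exactly $\mathrm{sat}(n,K_{2,3})$ edges. $e(G)$ is the number of edges and $\delta(G)$ the minimum degree of $G$. *)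

theory Defs
  imports Main
begin

definition graph :: "'a set \<Rightarrow> ('a \<Rightarrow> 'a \<Rightarrow> bool) \<Rightarrow> bool" where
  "graph V E \<longleftrightarrow> finite V \<and> (\<forall>u v. E u v \<longrightarrow> u \<in> V \<and> v \<in> V)
     \<and> (\<forall>u v. E u v \<longrightarrow> E v u) \<and> (\<forall>u. \<not> E u u)"

definition num_edges :: "'a set \<Rightarrow> ('a \<Rightarrow> 'a \<Rightarrow> bool) \<Rightarrow> nat" where
  "num_edges V E = card {{u, v} | u v. u \<in> V \<and> v \<in> V \<and> E u v}"

definition degree :: "'a set \<Rightarrow> ('a \<Rightarrow> 'a \<Rightarrow> bool) \<Rightarrow> 'a \<Rightarrow> nat" where
  "degree V E x = card {y \<in> V. E x y}"

definition min_degree :: "'a set \<Rightarrow> ('a \<Rightarrow> 'a \<Rightarrow> bool) \<Rightarrow> nat" where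
  "min_degree V E = Min (degree V E ` V)"

definition has_K23 :: "'a set \<Rightarrow> ('a \<Rightarrow> 'a \<Rightarrow> bool) \<Rightarrow> bool" where
  "has_K23 V E \<longleftrightarrow> (\<exists>a1 a2 b1 b2 b3.
     {a1, a2, b1, b2, b3} \<subseteq> V \<and> card {a1, a2, b1, b2, b3} = 5 \<and>
     E a1 b1 \<and> E a1 b2 \<and> E a1 b3 \<and> E a2 b1 \<and> E a2 b2 \<and> E a2 b3)"

definition add_edge :: "('a \<Rightarrow> 'a \<Rightarrow> bool) \<Rightarrow> 'a \<Rightarrow> 'a \<Rightarrow> ('a \<Rightarrow> 'a \<Rightarrow> bool)" where
  "add_edge E u v = (\<lambda>x y. E x y \<or> (x = u \<and> y = v) \<or> (x = v \<and> y = u))"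

definition K23_saturated :: "'a set \<Rightarrow> ('a \<Rightarrow> 'a \<Rightarrow> bool) \<Rightarrow> bool" where
  "K23_saturated V E \<longleftrightarrow> graph V E \<and> \<not> has_K23 V E \<and>
     (\<forall>u \<in> V. \<forall>v \<in> V. u \<noteq> v \<and> \<not> E u v \<longrightarrow> has_K23 V (add_edge E u v))"

text \<open>sat(n, K_{2,3}): minimum number of edges of a K_{2,3}-saturated graph on n vertices
  (vertex sets taken, w.l.o.g., to be sets of naturals).\<close>
definition sat_K23 :: "nat \<Rightarrow> nat" where
  "sat_K23 n = (LEAST m. \<exists>(V :: nat set) E. card V = n \<and> K23_saturated V E \<and> num_edges V E = m)"

definition sat_graph_K23 :: "nat \<Rightarrow> 'a set \<Rightarrow> ('a \<Rightarrow> 'a \<Rightarrow> bool) \<Rightarrow> bool" where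
  "sat_graph_K23 n V E \<longleftrightarrow> card V = n \<and> K23_saturated V E \<and> num_edges V E = sat_K23 n"

end

theory Submission
  imports Defs
begin


lemma handshake:
  assumes fin: "finite S" and sy: "\<And>u v. E u v \<Longrightarrow> E v u" and ir: "\<And>u. \<not> E u u"
  shows "2 * card {{u, v} | u v. u \<in> S \<and> v \<in> S \<and> E u v} = (\<Sum>u\<in>S. card {v\<in>S. E u v})"
proof -
  define Ed where "Ed = {{u, v} | u v. u \<in> S \<and> v \<in> S \<and> E u v}"
  define P where "P = Sigma S (\<lambda>u. {v\<in>S. E u v})"
  have cP: "card P = (\<Sum>u\<in>S. card {v\<in>S. E u v})" unfolding P_def using fin by simp
  have finEd: "finite Ed"
  proof -
    have "Ed \<subseteq> Pow S" unfolding Ed_def by auto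
    thus ?thesis using fin by (meson finite_Pow_iff finite_subset)
  qed
  have PU: "P = (\<Union>e\<in>Ed. {p\<in>P. {fst p, snd p} = e})" unfolding P_def Ed_def by fastforce
  have fib: "card {p\<in>P. {fst p, snd p} = e} = 2" if eE: "e \<in> Ed" for e
  proof -
    obtain u v where e: "e = {u,v}" "u \<in> S" "v \<in> S" "E u v" using eE unfolding Ed_def by blast
    have "u \<noteq> v" using e ir by auto
    have "{p\<in>P. {fst p, snd p} = e} = {(u,v),(v,u)}"
      using e sy unfolding P_def by (auto simp: doubleton_eq_iff)
    thus ?thesis using \<open>u \<noteq> v\<close> by simp
  qed
  have finP: "finite P" unfolding P_def using fin by simp
  have "card P = (\<Sum>e\<in>Ed. card {p\<in>P. {fst p, snd p} = e})"
    apply (subst PU)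
    apply (rule card_UN_disjoint)
    using finEd finP by auto
  also have "\<dots> = 2 * card Ed" using fib by simp
  finally show ?thesis using cP unfolding Ed_def by simp
qed

lemma card5_distinct: "card {a,b,c,d,e} = 5 \<Longrightarrow> distinct [a,b,c,d,e]"
  using card_distinct[of "[a,b,c,d,e]"] by simp

lemma distinct_card5: "distinct [a,b,c,d,e] \<Longrightarrow> card {a,b,c,d,e} = 5"
  using distinct_card[of "[a,b,c,d,e]"] by simp



definition sw :: "('a\<Rightarrow>'a\<Rightarrow>bool) \<Rightarrow> 'a \<Rightarrow> 'a \<Rightarrow> bool" where
  "sw E u v \<longleftrightarrow> (\<exists>a b c. a \<noteq> u \<and> a \<noteq> v \<and> b \<noteq> u \<and> b \<noteq> v \<and> b \<noteq> a \<and> c \<noteq> u \<and> c \<noteq> v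
      \<and> c \<noteq> a \<and> c \<noteq> b \<and> E a v \<and> E u b \<and> E a b \<and> E u c \<and> E a c)"

lemma sw_key:
  assumes d: "distinct [a1,a2,b1,b2,b3]"
    and e: "add_edge E u v a1 b1" "add_edge E u v a1 b2" "add_edge E u v a1 b3"
           "add_edge E u v a2 b1" "add_edge E u v a2 b2" "add_edge E u v a2 b3"
    and uv: "{a1,b1} = {u,v}"
  shows "sw E a1 b1"
proof -
  have h: "a1 = u \<and> b1 = v \<or> a1 = v \<and> b1 = u" using uv by (auto simp: doubleton_eq_iff)
  have E': "\<And>p q. add_edge E u v p q \<Longrightarrow> \<not> (p = a1 \<and> q = b1) \<Longrightarrow> \<not> (p = b1 \<and> q = a1) \<Longrightarrow> E p q"
    using h by (auto simp: add_edge_def)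
  have "E a2 b1" by (rule E'[OF e(4)]) (use d in auto)
  moreover have "E a1 b2" by (rule E'[OF e(2)]) (use d in auto)
  moreover have "E a2 b2" by (rule E'[OF e(5)]) (use d in auto)
  moreover have "E a1 b3" by (rule E'[OF e(3)]) (use d in auto)
  moreover have "E a2 b3" by (rule E'[OF e(6)]) (use d in auto)
  ultimately show ?thesis unfolding sw_def
    apply -
    apply (rule exI[of _ a2], rule exI[of _ b2], rule exI[of _ b3])
    using d by auto
qed


lemma sat_case:
  assumes K: "has_K23 V (add_edge E u v)" and nK: "\<not> has_K23 V E"
  shows "sw E u v \<or> sw E v u"
proof -
  obtain a1 a2 b1 b2 b3 where sub: "{a1, a2, b1, b2, b3} \<subseteq> V" and c5: "card {a1, a2, b1, b2, b3} = 5"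
    and e: "add_edge E u v a1 b1" "add_edge E u v a1 b2" "add_edge E u v a1 b3"
           "add_edge E u v a2 b1" "add_edge E u v a2 b2" "add_edge E u v a2 b3"
    using K unfolding has_K23_def by blast
  have d: "distinct [a1,a2,b1,b2,b3]" using card5_distinct[OF c5] .
  have nall: "\<not> (E a1 b1 \<and> E a1 b2 \<and> E a1 b3 \<and> E a2 b1 \<and> E a2 b2 \<and> E a2 b3)"
    using nK sub c5 unfolding has_K23_def by blast
  have AE: "\<And>p q. add_edge E u v p q \<Longrightarrow> \<not> E p q \<Longrightarrow> {p,q} = {u,v}"
    by (auto simp: add_edge_def)
  have fin: "{p,q} = {u,v} \<Longrightarrow> sw E p q \<Longrightarrow> sw E u v \<or> sw E v u" for p q
    by (auto simp: doubleton_eq_iff)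
  have d1: "distinct [a1,a2,b2,b1,b3]" "distinct [a1,a2,b3,b1,b2]" "distinct [a2,a1,b1,b2,b3]"
     "distinct [a2,a1,b2,b1,b3]" "distinct [a2,a1,b3,b1,b2]" using d by auto
  show ?thesis
  proof (cases "E a1 b1")
    case False
    then show ?thesis using fin[OF AE[OF e(1) False] sw_key[OF d e AE[OF e(1) False]]] by blast
  next
    case T1: True
    show ?thesis
    proof (cases "E a1 b2")
      case False
      then show ?thesis using fin[OF AE[OF e(2) False] sw_key[OF d1(1) e(2) e(1) e(3) e(5) e(4) e(6) AE[OF e(2) False]]] by blast
    next
      case T2: True
      show ?thesis
      proof (cases "E a1 b3")
        case False
        then show ?thesis using fin[OF AE[OF e(3) False] sw_key[OF d1(2) e(3) e(1) e(2) e(6) e(4) e(5) AE[OF e(3) False]]] by blast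
      next
        case T3: True
        show ?thesis
        proof (cases "E a2 b1")
          case False
          then show ?thesis using fin[OF AE[OF e(4) False] sw_key[OF d1(3) e(4) e(5) e(6) e(1) e(2) e(3) AE[OF e(4) False]]] by blast
        next
          case T4: True
          show ?thesis
          proof (cases "E a2 b2")
            case False
            then show ?thesis using fin[OF AE[OF e(5) False] sw_key[OF d1(4) e(5) e(4) e(6) e(2) e(1) e(3) AE[OF e(5) False]]] by blast
          next
            case T5: True
            have False: "\<not> E a2 b3" using nall T1 T2 T3 T4 T5 by blast
            then show ?thesis using fin[OF AE[OF e(6) False] sw_key[OF d1(5) e(6) e(4) e(5) e(3) e(1) e(2) AE[OF e(6) False]]] by blast
          qed
        qed
      qed
    qed
  qed
qed

lemma three_elems:
  assumes "3 \<le> card S"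
  obtains a b c where "a \<in> S" "b \<in> S" "c \<in> S" "a \<noteq> b" "a \<noteq> c" "b \<noteq> c"
proof -
  have "Suc 2 \<le> card S" using assms by simp
  then obtain a S1 where 1: "S = insert a S1" "a \<notin> S1" "2 \<le> card S1"
    unfolding card_le_Suc_iff by blast
  have "Suc 1 \<le> card S1" using 1 by simp
  then obtain b S2 where 2: "S1 = insert b S2" "b \<notin> S2" "1 \<le> card S2"
    unfolding card_le_Suc_iff by blast
  have "Suc 0 \<le> card S2" using 2 by simp
  then obtain c S3 where 3: "S2 = insert c S3" "c \<notin> S3"
    unfolding card_le_Suc_iff by blast
  show ?thesis apply (rule that[of a b c]) using 1 2 3 by auto
qed



locale K23L =
  fixes V :: "'a set" and E :: "'a \<Rightarrow> 'a \<Rightarrow> bool" and x y z :: 'a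
  assumes fin: "finite V"
    and inV: "\<And>u v. E u v \<Longrightarrow> u \<in> V \<and> v \<in> V"
    and symm: "\<And>u v. E u v \<Longrightarrow> E v u"
    and irr: "\<And>u. \<not> E u u"
    and noK: "\<not> has_K23 V E"
    and sat: "\<And>u v. u \<in> V \<Longrightarrow> v \<in> V \<Longrightarrow> u \<noteq> v \<Longrightarrow> \<not> E u v \<Longrightarrow> has_K23 V (add_edge E u v)"
    and Exy: "E x y" and Exz: "E x z" and Eyz: "E y z"
    and Nx: "\<And>w. E x w \<Longrightarrow> w = y \<or> w = z"
    and cyz: "\<And>w. E y w \<Longrightarrow> E z w \<Longrightarrow> w = x"

sublocale K23L \<subseteq> s: K23L V E x z y
  by unfold_locales (use fin inV symm irr noK sat Exy Exz Eyz Nx cyz in \<open>blast+\<close>)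

context K23L begin

definition WW where "WW = V - {x,y,z}"
definition YY where "YY = {w\<in>WW. E y w}"
definition ZZ where "ZZ = {w\<in>WW. E z w}"
definition RR where "RR = WW - YY - ZZ"
definition nb :: "'a set \<Rightarrow> 'a \<Rightarrow> nat" where "nb S w = card {b\<in>S. E w b}"
definition NA where "NA w = {b\<in>V. E w b \<and> E y b \<and> b \<noteq> x}"
definition NB where "NB w = {b\<in>V. E w b \<and> E z b \<and> b \<noteq> x}"
definition al where "al w = card (NA w)"
definition be where "be w = card (NB w)"
definition mm where "mm w = min (al w) (be w)"
definition Dd where "Dd = {w \<in> YY \<union> ZZ. mm w = 0}"
definition N2 where "N2 = {w \<in> YY \<union> ZZ. mm w = 2}"
definition PP where "PP v = {r\<in>RR. E v r \<and> 1 \<le> mm r}"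
definition DU where "DU = {v\<in>Dd. \<exists>u\<in>YY\<union>ZZ. E v u \<and> mm u = 2}"
definition DP where "DP = Dd - DU"
definition amt where "amt v = (if 2 \<le> card (PP v) then 2 else (4::nat))"

end

context K23L begin

lemma sWW: "s.WW = WW" unfolding WW_def s.WW_def by auto
lemma sYY: "s.YY = ZZ" unfolding ZZ_def s.YY_def sWW ..
lemma sZZ: "s.ZZ = YY" unfolding YY_def s.ZZ_def sWW ..
lemma sRR: "s.RR = RR" unfolding RR_def s.RR_def sWW sYY sZZ by auto
lemma snb: "s.nb = nb" unfolding nb_def[abs_def] s.nb_def[abs_def] ..
lemma sNA: "s.NA = NB" unfolding NB_def[abs_def] s.NA_def[abs_def] ..
lemma sNB: "s.NB = NA" unfolding NA_def[abs_def] s.NB_def[abs_def] ..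
lemma sal: "s.al = be" unfolding be_def[abs_def] s.al_def[abs_def] sNA ..
lemma sbe: "s.be = al" unfolding al_def[abs_def] s.be_def[abs_def] sNB ..
lemma smm: "s.mm = mm" unfolding mm_def[abs_def] s.mm_def[abs_def] sal sbe by (auto simp: min.commute)
lemma sDd: "s.Dd = Dd" unfolding Dd_def s.Dd_def smm sYY sZZ by auto
lemma sN2: "s.N2 = N2" unfolding N2_def s.N2_def smm sYY sZZ by auto
lemma sPP: "s.PP = PP" unfolding PP_def[abs_def] s.PP_def[abs_def] smm sRR ..
lemma sDU: "s.DU = DU" unfolding DU_def s.DU_def smm sDd sYY sZZ by auto
lemma sDP: "s.DP = DP" unfolding DP_def s.DP_def sDd sDU ..
lemma samt: "s.amt = amt" unfolding amt_def[abs_def] s.amt_def[abs_def] sPP ..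

lemmas sym_simps = sWW sYY sZZ sRR sNA sNB sal sbe smm sDd sN2 sPP sDU sDP samt

end


context K23L begin

lemma xy: "x \<noteq> y" "x \<noteq> z" "y \<noteq> z" using irr Exy Exz Eyz by metis+
lemma inVs: "x \<in> V" "y \<in> V" "z \<in> V" using inV Exy Exz by blast+

lemma finWW: "finite WW" unfolding WW_def using fin by simp
lemma finYY: "finite YY" "finite ZZ" "finite RR"
  unfolding YY_def ZZ_def RR_def using finWW by auto
lemma WW_V: "w \<in> WW \<Longrightarrow> w \<in> V \<and> w \<noteq> x \<and> w \<noteq> y \<and> w \<noteq> z" unfolding WW_def by auto
lemma YY_WW: "YY \<subseteq> WW" "ZZ \<subseteq> WW" "RR \<subseteq> WW" unfolding YY_def ZZ_def RR_def by auto
lemma YZ_disj: "YY \<inter> ZZ = {}"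
  unfolding YY_def ZZ_def using cyz WW_V by blast
lemma WW_split: "WW = YY \<union> ZZ \<union> RR" unfolding RR_def using YY_WW by auto
lemma RR_disj: "RR \<inter> (YY \<union> ZZ) = {}" unfolding RR_def by auto
lemma notEx: "w \<in> WW \<Longrightarrow> \<not> E x w \<and> \<not> E w x" using Nx symm WW_V by blast
lemma Ez_iff: "w \<in> WW \<Longrightarrow> E w z \<longleftrightarrow> w \<in> ZZ" unfolding ZZ_def using symm by blast
lemma Ey_iff: "w \<in> WW \<Longrightarrow> E w y \<longleftrightarrow> w \<in> YY" unfolding YY_def using symm by blast
lemma in_WW: "v \<in> V \<Longrightarrow> v \<noteq> x \<Longrightarrow> v \<noteq> y \<Longrightarrow> v \<noteq> z \<Longrightarrow> v \<in> WW" unfolding WW_def by auto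

lemma card_common: assumes "a \<noteq> b" shows "card {c\<in>V. E a c \<and> E b c} \<le> 2"
proof (rule ccontr)
  assume "\<not> ?thesis"
  hence "3 \<le> card {c\<in>V. E a c \<and> E b c}" by simp
  then obtain c1 c2 c3 where c: "c1 \<in> {c\<in>V. E a c \<and> E b c}" "c2 \<in> {c\<in>V. E a c \<and> E b c}"
     "c3 \<in> {c\<in>V. E a c \<and> E b c}" "c1 \<noteq> c2" "c1 \<noteq> c3" "c2 \<noteq> c3"
    by (rule three_elems)
  have d: "distinct [a,b,c1,c2,c3]" using c assms irr by auto
  have sub: "{a,b,c1,c2,c3} \<subseteq> V" using c inV by blast
  have "has_K23 V E" unfolding has_K23_def
    apply (rule exI[of _ a], rule exI[of _ b], rule exI[of _ c1], rule exI[of _ c2], rule exI[of _ c3])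
    using c sub distinct_card5[OF d] by simp
  thus False using noK by simp
qed

lemma finNA: "finite (NA w)" "finite (NB w)" unfolding NA_def NB_def using fin by auto

lemma al_le2: "w \<in> WW \<Longrightarrow> al w \<le> 2"
proof -
  assume w: "w \<in> WW"
  have "NA w \<subseteq> {c\<in>V. E w c \<and> E y c}" unfolding NA_def by blast
  hence "al w \<le> card {c\<in>V. E w c \<and> E y c}" unfolding al_def using fin by (simp add: card_mono)
  also have "\<dots> \<le> 2" using card_common[of w y] w WW_V by blast
  finally show ?thesis .
qed

lemma al_ge2: "E w b \<Longrightarrow> E y b \<Longrightarrow> E w c \<Longrightarrow> E y c \<Longrightarrow> b \<noteq> c \<Longrightarrow> b \<noteq> x \<Longrightarrow> c \<noteq> x \<Longrightarrow> 2 \<le> al w"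
proof -
  assume h: "E w b" "E y b" "E w c" "E y c" "b \<noteq> c" "b \<noteq> x" "c \<noteq> x"
  have "b \<in> V" "c \<in> V" using h inV by blast+
  hence "{b,c} \<subseteq> NA w" unfolding NA_def using h by blast
  hence "card {b,c} \<le> al w" unfolding al_def using finNA by (simp add: card_mono)
  thus ?thesis using h by simp
qed

lemma al_ge1: "E w b \<Longrightarrow> E y b \<Longrightarrow> b \<noteq> x \<Longrightarrow> 1 \<le> al w"
proof -
  assume h: "E w b" "E y b" "b \<noteq> x"
  have "b \<in> V" using h inV by blast
  hence "b \<in> NA w" unfolding NA_def using h by blast
  hence "NA w \<noteq> {}" by blast
  thus ?thesis unfolding al_def using finNA(1)[of w] by (simp add: Suc_leI card_gt_0_iff)
qed

end

context K23L begin

lemma F1: assumes w: "w \<in> WW" shows "2 \<le> al w \<or> 2 \<le> be w"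
proof -
  have "x \<noteq> w" "\<not> E x w" "w \<in> V" using w notEx WW_V by auto
  hence "sw E x w \<or> sw E w x" using sat_case[OF sat[OF inVs(1)] noK] by blast
  thus ?thesis
  proof
    assume "sw E x w"
    then obtain a b c where h: "a \<noteq> x" "b \<noteq> a" "c \<noteq> b" "E x b" "E a b" "E x c" "E a c"
      unfolding sw_def by blast
    have "b = y \<and> c = z \<or> b = z \<and> c = y" using h Nx by blast
    hence "E y a" "E z a" using h symm by auto
    thus ?thesis using cyz h by blast
  next
    assume "sw E w x"
    then obtain a b c where h: "b \<noteq> x" "c \<noteq> x" "c \<noteq> b" "E a x" "E w b" "E a b" "E w c" "E a c"
      unfolding sw_def by blast
    have "a = y \<or> a = z" using h Nx symm by blast
    thus ?thesis
    proof
      assume "a = y" thus ?thesis using al_ge2[of w b c] h by auto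
    next
      assume "a = z" thus ?thesis using s.al_ge2[of w b c] h unfolding sym_simps by auto
    qed
  qed
qed


lemma be_le2: "w \<in> WW \<Longrightarrow> be w \<le> 2" using s.al_le2 unfolding sym_simps .

lemma al_be: "w \<in> WW \<Longrightarrow> al w + be w = mm w + 2"
proof -
  assume w: "w \<in> WW"
  have "2 \<le> al w \<or> 2 \<le> be w" "al w \<le> 2" "be w \<le> 2" using F1 al_le2 be_le2 w by auto
  thus ?thesis unfolding mm_def by linarith
qed

lemma mm_le2: "w \<in> WW \<Longrightarrow> mm w \<le> 2" using al_le2 unfolding mm_def by (meson min.coboundedI1)

lemma nb_sum: "finite S \<Longrightarrow> nb S w = (\<Sum>b\<in>S. if E w b then 1 else 0)"
  unfolding nb_def by (simp add: sum.inter_filter[symmetric])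

lemma al_split: assumes w: "w \<in> WW" shows "al w = nb YY w + (if E w z then 1 else 0)"
proof -
  have "NA w = {b\<in>YY. E w b} \<union> (if E w z then {z} else {})"
  proof
    show "NA w \<subseteq> {b\<in>YY. E w b} \<union> (if E w z then {z} else {})"
    proof
      fix b assume b: "b \<in> NA w"
      hence h: "b \<in> V" "E w b" "E y b" "b \<noteq> x" unfolding NA_def by auto
      show "b \<in> {b\<in>YY. E w b} \<union> (if E w z then {z} else {})"
      proof (cases "b = z")
        case True thus ?thesis using h by simp
      next
        case False
        have "b \<noteq> y" using h irr by blast
        hence "b \<in> WW" using in_WW h False by blast
        thus ?thesis unfolding YY_def using h by simp
      qed
    qed
  next
    show "{b\<in>YY. E w b} \<union> (if E w z then {z} else {}) \<subseteq> NA w"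
      unfolding NA_def YY_def using WW_V inVs xy Eyz by auto
  qed
  moreover have "z \<notin> {b\<in>YY. E w b}" using YY_WW WW_V by blast
  moreover have "finite {b\<in>YY. E w b}" using finYY by simp
  ultimately show ?thesis unfolding al_def nb_def by (cases "E w z") (simp_all add: card_insert_if)
qed

end

context K23L begin

lemma be_split: "w \<in> WW \<Longrightarrow> be w = nb ZZ w + (if E w y then 1 else 0)"
  using s.al_split unfolding sym_simps .

lemma nb_YZ: "w \<in> YY \<union> ZZ \<Longrightarrow> nb YY w + nb ZZ w + 1 = mm w + 2"
proof -
  assume w: "w \<in> YY \<union> ZZ"
  hence W: "w \<in> WW" using YY_WW by auto
  have "E w z \<noteq> E w y" using w YZ_disj Ez_iff[OF W] Ey_iff[OF W] by auto
  thus ?thesis using al_split[OF W] be_split[OF W] al_be[OF W] by auto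
qed

lemma nb_R: "w \<in> RR \<Longrightarrow> nb YY w + nb ZZ w = mm w + 2"
proof -
  assume w: "w \<in> RR"
  hence W: "w \<in> WW" using YY_WW by auto
  have "\<not> E w z" "\<not> E w y" using w Ez_iff[OF W] Ey_iff[OF W] unfolding RR_def by auto
  thus ?thesis using al_split[OF W] be_split[OF W] al_be[OF W] by auto
qed


lemma D1: assumes "v \<in> Dd" "v \<in> YY" shows "nb YY v = 0" "nb ZZ v = 1"
proof -
  have W: "v \<in> WW" using assms YY_WW by auto
  have "\<not> E v z" "E v y" using assms YZ_disj Ez_iff[OF W] Ey_iff[OF W] by auto
  hence a: "al v = nb YY v" "be v = nb ZZ v + 1" using al_split[OF W] be_split[OF W] by auto
  have m: "mm v = 0" using assms unfolding Dd_def by auto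
  hence a0: "al v = 0" using a unfolding mm_def by linarith
  thus "nb YY v = 0" using a by simp
  show "nb ZZ v = 1" using al_be[OF W] a m a0 by simp
qed

lemma D1n: assumes "v \<in> Dd" "v \<in> YY" "b \<in> YY" shows "\<not> E v b"
proof
  assume "E v b"
  hence ne: "{b\<in>YY. E v b} \<noteq> {}" using assms by blast
  have fi: "finite {b\<in>YY. E v b}" using finYY by simp
  have "card {b\<in>YY. E v b} \<noteq> 0" using ne fi by simp
  thus False using D1(1)[OF assms(1,2)] unfolding nb_def by simp
qed

lemma D1u: assumes "v \<in> Dd" "v \<in> YY" "E v u1" "E v u2" "u1 \<in> ZZ" "u2 \<in> ZZ" shows "u1 = u2"
proof -
  have c: "card {b\<in>ZZ. E v b} \<le> Suc 0" using D1(2)[OF assms(1,2)] unfolding nb_def by simp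
  have f: "finite {b\<in>ZZ. E v b}" using finYY by simp
  have "u1 \<in> {b\<in>ZZ. E v b}" "u2 \<in> {b\<in>ZZ. E v b}" using assms by simp_all
  thus ?thesis using c f card_le_Suc0_iff_eq by blast
qed

lemma mm_ge1: "E t v \<Longrightarrow> E y v \<Longrightarrow> v \<noteq> x \<Longrightarrow> E t a \<Longrightarrow> E z a \<Longrightarrow> a \<noteq> x \<Longrightarrow> 1 \<le> mm t"
proof -
  assume h: "E t v" "E y v" "v \<noteq> x" "E t a" "E z a" "a \<noteq> x"
  have "1 \<le> al t" using al_ge1[OF h(1-3)] .
  moreover have "1 \<le> be t" using s.al_ge1[OF h(4-6)] unfolding sal .
  ultimately show ?thesis unfolding mm_def by simp
qed

end

context K23L begin

lemma notYZ: "w \<in> YY \<Longrightarrow> w \<notin> ZZ" using YZ_disj by blast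

lemma Pne: assumes v: "v \<in> DP" "v \<in> YY" shows "PP v \<noteq> {}"
proof -
  have vD: "v \<in> Dd" and vnU: "v \<notin> DU" using v unfolding DP_def by auto
  have vW: "v \<in> WW" using v YY_WW by blast
  have vV: "v \<in> V" "v \<noteq> x" "v \<noteq> y" "v \<noteq> z" using WW_V[OF vW] by auto
  have Eyv: "E y v" using v unfolding YY_def by blast
  have noY: "\<And>b. b \<in> YY \<Longrightarrow> \<not> E v b" using D1n[OF vD v(2)] by blast
  have oneZ: "\<And>u1 u2. E v u1 \<Longrightarrow> E v u2 \<Longrightarrow> u1 \<in> ZZ \<Longrightarrow> u2 \<in> ZZ \<Longrightarrow> u1 = u2"
    using D1u[OF vD v(2)] by blast
  have vz: "\<not> E v z" using Ez_iff[OF vW] notYZ[OF v(2)] by blast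
  have vx: "\<not> E v x" using notEx[OF vW] by blast
  have "sw E v z \<or> sw E z v" using sat_case[OF sat[OF vV(1) inVs(3) vV(4) vz] noK] .
  thus ?thesis
  proof
    assume "sw E v z"
    then obtain a b c where h: "a \<noteq> v" "a \<noteq> z" "b \<noteq> v" "b \<noteq> z" "b \<noteq> a" "c \<noteq> v" "c \<noteq> z"
      "c \<noteq> a" "c \<noteq> b" "E a z" "E v b" "E a b" "E v c" "E a c" unfolding sw_def by blast
    have aV: "a \<in> V" using inV h(10) by blast
    have ax: "a \<noteq> x"
    proof
      assume "a = x"
      hence "b = y" "c = y" using Nx h by blast+
      thus False using h(9) by simp
    qed
    have ay: "a \<noteq> y"
    proof
      assume ay: "a = y"
      have "b \<in> V" using inV h(11) by blast
      moreover have "b \<noteq> x" using vx h(11) by blast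
      moreover have "b \<noteq> y" using irr h(12) ay by blast
      ultimately have "b \<in> WW" using in_WW h(4) by blast
      hence "b \<in> YY" using h(12) ay unfolding YY_def by blast
      thus False using noY h(11) by blast
    qed
    have aW: "a \<in> WW" using in_WW[OF aV ax ay h(2)] .
    have aZ: "a \<in> ZZ" using Ez_iff[OF aW] h(10) by blast
    have aY: "a \<notin> YY" using aZ YZ_disj by blast
    have tRZ: "t \<in> ZZ \<or> t \<in> RR" if t: "E v t" "E a t" "t \<noteq> z" for t
    proof -
      have "t \<in> V" using inV t(1) by blast
      moreover have "t \<noteq> x" using vx t(1) by blast
      moreover have "t \<noteq> y" using t(2) Ey_iff[OF aW] aY by blast
      ultimately have "t \<in> WW" using in_WW t(3) by blast
      moreover have "t \<notin> YY" using noY t(1) by blast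
      ultimately show ?thesis using WW_split by blast
    qed
    have "b \<in> RR \<or> c \<in> RR"
    proof (rule ccontr)
      assume "\<not> ?thesis"
      hence "b \<in> ZZ" "c \<in> ZZ" using tRZ h by blast+
      thus False using oneZ h by blast
    qed
    then obtain t where t: "t \<in> RR" "E v t" "E a t" using h by blast
    have "1 \<le> mm t" using mm_ge1[of t v a] t symm Eyv vV(2) ax h(10) by blast
    hence "t \<in> PP v" using t unfolding PP_def by blast
    thus ?thesis by blast
  next
    assume "sw E z v"
    then obtain a b c where h: "a \<noteq> z" "a \<noteq> v" "b \<noteq> z" "b \<noteq> v" "b \<noteq> a" "c \<noteq> z" "c \<noteq> v"
      "c \<noteq> a" "c \<noteq> b" "E a v" "E z b" "E a b" "E z c" "E a c" unfolding sw_def by blast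
    have aV: "a \<in> V" using inV h(10) by blast
    have ax: "a \<noteq> x" using vx symm h(10) by blast
    have ay: "a \<noteq> y"
    proof
      assume "a = y"
      hence "b = x" "c = x" using cyz symm h by blast+
      thus False using h(9) by simp
    qed
    have aW: "a \<in> WW" using in_WW[OF aV ax ay h(1)] .
    have aY: "a \<notin> YY" using noY symm h(10) by blast
    have nax: "\<not> E a x" using notEx[OF aW] by blast
    have be2: "2 \<le> be a" using s.al_ge2[of a b c] h nax unfolding sal by blast
    have al1: "1 \<le> al a" using al_ge1[of a v] h(10) Eyv vV(2) by blast
    show ?thesis
    proof (cases "a \<in> ZZ")
      case True
      have "E a z" using True Ez_iff[OF aW] by blast
      hence "2 \<le> al a" using al_ge2[of a v z] h(10) Eyv Eyz vV(4) vV(2) xy(2) by metis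
      hence "mm a = 2" using be2 mm_le2[OF aW] unfolding mm_def by simp
      hence "v \<in> DU" using vD True symm h(10) unfolding DU_def by blast
      thus ?thesis using vnU by blast
    next
      case False
      hence "a \<in> RR" using aW aY WW_split by blast
      moreover have "1 \<le> mm a" using be2 al1 unfolding mm_def by simp
      ultimately have "a \<in> PP v" using symm h(10) unfolding PP_def by blast
      thus ?thesis by blast
    qed
  qed
qed

lemma amt2:
  assumes r: "r \<in> RR" "nb YY r = 1" and v0: "v0 \<in> YY" "E r v0" "v0 \<in> Dd"
    and u: "u \<in> DP" "u \<in> ZZ" "r \<in> PP u"
  shows "2 \<le> card (PP u)"
proof (rule ccontr)
  assume "\<not> ?thesis"
  hence c1: "card (PP u) \<le> Suc 0" by simp
  have finP: "finite (PP u)" using finYY(3) unfolding PP_def by simp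
  have onlyr: "\<And>t. t \<in> RR \<Longrightarrow> E u t \<Longrightarrow> 1 \<le> mm t \<Longrightarrow> t = r"
  proof -
    fix t assume "t \<in> RR" "E u t" "1 \<le> mm t"
    hence "t \<in> PP u" unfolding PP_def by blast
    thus "t = r" using u(3) c1 finP card_le_Suc0_iff_eq by blast
  qed
  have uD: "u \<in> Dd" and unU: "u \<notin> DU" using u unfolding DP_def by auto
  have uW: "u \<in> WW" using u YY_WW by blast
  have uV: "u \<in> V" "u \<noteq> x" "u \<noteq> y" "u \<noteq> z" using WW_V[OF uW] by auto
  have Ezu: "E z u" using u unfolding ZZ_def by blast
  have noZ: "\<And>b. b \<in> ZZ \<Longrightarrow> \<not> E u b" using s.D1n[of u] uD u(2) unfolding sym_simps by blast
  have oneY: "\<And>a1 a2. E u a1 \<Longrightarrow> E u a2 \<Longrightarrow> a1 \<in> YY \<Longrightarrow> a2 \<in> YY \<Longrightarrow> a1 = a2"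
    using s.D1u[of u] uD u(2) unfolding sym_simps by blast
  have fr: "finite {b\<in>YY. E r b}" using finYY by simp
  have cr: "card {b\<in>YY. E r b} \<le> Suc 0" using r(2) unfolding nb_def by simp
  have onlyv0: "\<And>a. a \<in> YY \<Longrightarrow> E r a \<Longrightarrow> a = v0"
  proof -
    fix a assume "a \<in> YY" "E r a"
    hence "a \<in> {b\<in>YY. E r b}" "v0 \<in> {b\<in>YY. E r b}" using v0 by auto
    thus "a = v0" using fr cr card_le_Suc0_iff_eq by blast
  qed
  have v0noY: "\<And>b. b \<in> YY \<Longrightarrow> \<not> E v0 b" using D1n[OF v0(3) v0(1)] by blast
  have uy: "\<not> E u y" using Ey_iff[OF uW] notYZ u(2) by blast
  have ux: "\<not> E u x" using notEx[OF uW] by blast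
  have rW: "r \<in> WW" using r YY_WW by blast
  have "sw E u y \<or> sw E y u" using sat_case[OF sat[OF uV(1) inVs(2) uV(3) uy] noK] .
  thus False
  proof
    assume "sw E u y"
    then obtain a b c where h: "a \<noteq> u" "a \<noteq> y" "b \<noteq> u" "b \<noteq> y" "b \<noteq> a" "c \<noteq> u" "c \<noteq> y"
      "c \<noteq> a" "c \<noteq> b" "E a y" "E u b" "E a b" "E u c" "E a c" unfolding sw_def by blast
    have aV: "a \<in> V" using inV h(10) by blast
    have ax: "a \<noteq> x"
    proof
      assume "a = x"
      hence "b = z" "c = z" using Nx h by blast+
      thus False using h(9) by simp
    qed
    have az: "a \<noteq> z"
    proof
      assume az: "a = z"
      have "b \<in> V" using inV h(11) by blast
      moreover have "b \<noteq> x" using ux h(11) by blast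
      moreover have "b \<noteq> z" using irr h(12) az by blast
      ultimately have "b \<in> WW" using in_WW h(4) by blast
      hence "b \<in> ZZ" using h(12) az unfolding ZZ_def by blast
      thus False using noZ h(11) by blast
    qed
    have aW: "a \<in> WW" using in_WW[OF aV ax h(2) az] .
    have aY: "a \<in> YY" using Ey_iff[OF aW] h(10) by blast
    have aZ: "a \<notin> ZZ" using aY YZ_disj by blast
    have tRY: "t \<in> YY \<or> t = r" if t: "E u t" "E a t" "t \<noteq> y" for t
    proof -
      have "t \<in> V" using inV t(1) by blast
      moreover have "t \<noteq> x" using ux t(1) by blast
      moreover have "t \<noteq> z" using t(2) Ez_iff[OF aW] aZ by blast
      ultimately have tW: "t \<in> WW" using in_WW t(3) by blast
      moreover have "t \<notin> ZZ" using noZ t(1) by blast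
      ultimately have "t \<in> YY \<or> t \<in> RR" using WW_split by blast
      moreover have "t \<in> RR \<Longrightarrow> t = r"
      proof -
        assume tR: "t \<in> RR"
        have "1 \<le> mm t" using mm_ge1[of t a u] t symm h(10) ax Ezu uV(2) by blast
        thus "t = r" using onlyr tR t(1) by blast
      qed
      ultimately show ?thesis by blast
    qed
    have bb: "b \<in> YY \<or> b = r" using tRY h by blast
    have cc: "c \<in> YY \<or> c = r" using tRY h by blast
    have "\<not> (b \<in> YY \<and> c \<in> YY)" using oneY h by blast
    hence "(b = r \<and> c \<in> YY) \<or> (c = r \<and> b \<in> YY)" using bb cc h(9) by blast
    then obtain t2 where t2: "E a r" "t2 \<in> YY" "E a t2" using h by blast
    have "a = v0" using onlyv0[OF aY] symm t2(1) by blast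
    thus False using v0noY t2 by blast
  next
    assume "sw E y u"
    then obtain a b c where h: "a \<noteq> y" "a \<noteq> u" "b \<noteq> y" "b \<noteq> u" "b \<noteq> a" "c \<noteq> y" "c \<noteq> u"
      "c \<noteq> a" "c \<noteq> b" "E a u" "E y b" "E a b" "E y c" "E a c" unfolding sw_def by blast
    have aV: "a \<in> V" using inV h(10) by blast
    have ax: "a \<noteq> x" using ux symm h(10) by blast
    have az: "a \<noteq> z"
    proof
      assume "a = z"
      hence "b = x" "c = x" using cyz symm h by blast+
      thus False using h(9) by simp
    qed
    have aW: "a \<in> WW" using in_WW[OF aV ax h(1) az] .
    have aZ: "a \<notin> ZZ" using noZ symm h(10) by blast
    have nax: "\<not> E a x" using notEx[OF aW] by blast
    have al2: "2 \<le> al a" using al_ge2[of a b c] h nax by blast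
    have be1: "1 \<le> be a" using s.al_ge1[of a u] h(10) Ezu uV(2) unfolding sal by blast
    show False
    proof (cases "a \<in> YY")
      case True
      have "E a y" using True Ey_iff[OF aW] by blast
      hence "2 \<le> be a" using s.al_ge2[of a u y] h(10) Ezu symm[OF Eyz] uV(3) uV(2) xy(1) unfolding sal by metis
      hence "mm a = 2" using al2 mm_le2[OF aW] unfolding mm_def by simp
      hence "u \<in> DU" using uD True symm h(10) unfolding DU_def by blast
      thus False using unU by blast
    next
      case False
      hence aR: "a \<in> RR" using aW aZ WW_split by blast
      moreover have "1 \<le> mm a" using al2 be1 unfolding mm_def by simp
      ultimately have "a = r" using onlyr symm h(10) by blast
      moreover have "al r = nb YY r"
      proof -
        have "\<not> E r z" using Ez_iff[OF rW] r(1) unfolding RR_def by blast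
        thus ?thesis using al_split[OF rW] by simp
      qed
      ultimately show False using al2 r(2) by simp
    qed
  qed
qed

lemma inj1: assumes "u \<in> ZZ" "v1 \<in> Dd" "v2 \<in> Dd" "E v1 u" "E v2 u" shows "v1 = v2"
proof -
  have uW: "u \<in> WW" using assms YY_WW by blast
  have vY: "v \<in> YY" if "v \<in> Dd" "E v u" for v
  proof (rule ccontr)
    assume "v \<notin> YY"
    hence "v \<in> ZZ" using that unfolding Dd_def by blast
    thus False using s.D1n[of v u] that assms(1) unfolding sym_simps by blast
  qed
  have "E u z" using Ez_iff[OF uW] assms(1) by blast
  hence "al u = nb YY u + 1" using al_split[OF uW] by simp
  hence c: "card {b\<in>YY. E u b} \<le> Suc 0" using al_le2[OF uW] unfolding nb_def by simp
  have f: "finite {b\<in>YY. E u b}" using finYY by simp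
  have "v1 \<in> {b\<in>YY. E u b}" "v2 \<in> {b\<in>YY. E u b}" using vY assms symm by auto
  thus ?thesis using c f card_le_Suc0_iff_eq by blast
qed

lemma alR: "r \<in> RR \<Longrightarrow> al r = nb YY r \<and> be r = nb ZZ r"
proof -
  assume r: "r \<in> RR"
  hence rW: "r \<in> WW" using YY_WW by blast
  have "\<not> E r z" "\<not> E r y" using Ez_iff[OF rW] Ey_iff[OF rW] r unfolding RR_def by blast+
  thus ?thesis using al_split[OF rW] be_split[OF rW] by simp
qed

lemma finDP: "finite DP" "finite Dd" "finite DU" "finite N2"
  unfolding DP_def Dd_def DU_def N2_def using finYY by auto

lemma DP_sub: "DP \<subseteq> YY \<union> ZZ" unfolding DP_def Dd_def by blast

lemma amt_le4: "amt v \<le> 4" unfolding amt_def by simp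

lemma loadc:
  assumes r: "r \<in> RR" "nb YY r = 1" "nb ZZ r = 2"
  shows "(\<Sum>v\<in>DP. if r \<in> PP v then amt v else 0) \<le> 8"
proof -
  define S where "S = {v\<in>DP. r \<in> PP v}"
  have s1: "(\<Sum>v\<in>DP. if r \<in> PP v then amt v else 0) = sum amt S"
    unfolding S_def using finDP(1) by (simp add: sum.inter_filter)
  have finS: "finite S" unfolding S_def using finDP(1) by simp
  have SE: "\<And>v. v \<in> S \<Longrightarrow> E r v" unfolding S_def PP_def using symm by blast
  define SY where "SY = S \<inter> YY"
  define SZ where "SZ = S \<inter> ZZ"
  have SU: "S = SY \<union> SZ" unfolding SY_def SZ_def S_def using DP_sub by blast
  have SD: "SY \<inter> SZ = {}" unfolding SY_def SZ_def using YZ_disj by blast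
  have finSY: "finite SY" "finite SZ" unfolding SY_def SZ_def using finS by auto
  have s2: "sum amt S = sum amt SY + sum amt SZ" unfolding SU using finSY SD by (simp add: sum.union_disjoint)
  have cSY: "card SY \<le> 1"
  proof -
    have "SY \<subseteq> {b\<in>YY. E r b}" unfolding SY_def using SE by blast
    hence "card SY \<le> card {b\<in>YY. E r b}" using finYY by (simp add: card_mono)
    thus ?thesis using r(2) unfolding nb_def by simp
  qed
  have cSZ: "card SZ \<le> 2"
  proof -
    have "SZ \<subseteq> {b\<in>ZZ. E r b}" unfolding SZ_def using SE by blast
    hence "card SZ \<le> card {b\<in>ZZ. E r b}" using finYY by (simp add: card_mono)
    thus ?thesis using r(3) unfolding nb_def by simp
  qed
  have "sum amt SY \<le> card SY * 4" using sum_bounded_above[of SY amt 4] amt_le4 by simp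
  hence bY: "sum amt SY \<le> 4" using cSY by linarith
  show ?thesis
  proof (cases "SY = {}")
    case True
    have "sum amt SZ \<le> card SZ * 4" using sum_bounded_above[of SZ amt 4] amt_le4 by simp
    thus ?thesis using s1 s2 True cSZ by simp
  next
    case False
    then obtain v0 where v0: "v0 \<in> SY" by blast
    have v0p: "v0 \<in> YY" "E r v0" "v0 \<in> Dd" using v0 SE unfolding SY_def S_def DP_def by auto
    have "amt u = 2" if u: "u \<in> SZ" for u
    proof -
      have "u \<in> DP" "u \<in> ZZ" "r \<in> PP u" using u unfolding SZ_def S_def by auto
      hence "2 \<le> card (PP u)" using amt2[OF r(1,2) v0p] by blast
      thus ?thesis unfolding amt_def by simp
    qed
    hence "sum amt SZ \<le> card SZ * 2" using sum_bounded_above[of SZ amt 2] by simp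
    thus ?thesis using s1 s2 bY cSZ by simp
  qed
qed

end

context K23L begin

lemma load: assumes r: "r \<in> RR" shows "(\<Sum>v\<in>DP. if r \<in> PP v then amt v else 0) \<le> 8 * mm r"
proof -
  have rW: "r \<in> WW" using r YY_WW by blast
  have ab: "al r = nb YY r" "be r = nb ZZ r" using alR[OF r] by auto
  have s: "nb YY r + nb ZZ r = mm r + 2" using nb_R[OF r] .
  have le: "nb YY r \<le> 2" "nb ZZ r \<le> 2" using al_le2[OF rW] be_le2[OF rW] ab by auto
  have m2: "mm r \<le> 2" using mm_le2[OF rW] .
  have "mm r = 0 \<or> mm r = 1 \<or> mm r = 2" using m2 by auto
  moreover
  { assume m: "mm r = 0"
    have "(\<Sum>v\<in>DP. if r \<in> PP v then amt v else 0) = (\<Sum>v\<in>DP. 0)"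
      by (rule sum.cong) (use m in \<open>auto simp: PP_def\<close>)
    hence ?thesis using m by simp }
  moreover
  { assume m: "mm r = 2"
    define S where "S = {v\<in>DP. r \<in> PP v}"
    have s1: "(\<Sum>v\<in>DP. if r \<in> PP v then amt v else 0) = sum amt S"
      unfolding S_def using finDP(1) by (simp add: sum.inter_filter)
    have "S \<subseteq> {b\<in>YY. E r b} \<union> {b\<in>ZZ. E r b}" unfolding S_def PP_def using DP_sub symm by blast
    hence "card S \<le> card ({b\<in>YY. E r b} \<union> {b\<in>ZZ. E r b})" using finYY by (simp add: card_mono)
    also have "\<dots> \<le> nb YY r + nb ZZ r" unfolding nb_def by (rule card_Un_le)
    finally have cS: "card S \<le> 4" using s m by simp
    have "sum amt S \<le> card S * 4" using sum_bounded_above[of S amt 4] amt_le4 by simp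
    hence ?thesis using s1 cS m by simp }
  moreover
  { assume m: "mm r = 1"
    hence "nb YY r = 1 \<and> nb ZZ r = 2 \<or> nb YY r = 2 \<and> nb ZZ r = 1" using s le by auto
    hence ?thesis
    proof
      assume "nb YY r = 1 \<and> nb ZZ r = 2"
      thus ?thesis using loadc[OF r] m by simp
    next
      assume h: "nb YY r = 2 \<and> nb ZZ r = 1"
      have "(\<Sum>v\<in>DP. if r \<in> PP v then amt v else 0) \<le> 8"
        using s.loadc[of r] r h unfolding sym_simps by simp
      thus ?thesis using m by simp
    qed }
  ultimately show ?thesis by blast
qed

end

context K23L begin

lemma DU_card: "card DU \<le> card N2"
proof -
  define f where "f v = (SOME u. u \<in> YY \<union> ZZ \<and> E v u \<and> mm u = 2)" for v
  have fp: "f v \<in> YY \<union> ZZ \<and> E v (f v) \<and> mm (f v) = 2" if "v \<in> DU" for v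
  proof -
    have "\<exists>u. u \<in> YY \<union> ZZ \<and> E v u \<and> mm u = 2" using that unfolding DU_def by blast
    thus ?thesis unfolding f_def by (rule someI_ex)
  qed
  have "f ` DU \<subseteq> N2" using fp unfolding N2_def by blast
  moreover have "inj_on f DU"
  proof
    fix v1 v2 assume v: "v1 \<in> DU" "v2 \<in> DU" "f v1 = f v2"
    have D: "v1 \<in> Dd" "v2 \<in> Dd" using v unfolding DU_def by auto
    have "f v1 \<in> YY \<union> ZZ" "E v1 (f v1)" using fp[OF v(1)] by auto
    moreover have "E v2 (f v1)" using fp[OF v(2)] v(3) by simp
    ultimately show "v1 = v2" using inj1[OF _ D] s.inj1[of "f v1" v1 v2] D unfolding sym_simps by blast
  qed
  ultimately show ?thesis using finDP(4) by (simp add: card_inj_on_le)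
qed

lemma DP_card: "4 * card DP \<le> 8 * (\<Sum>r\<in>RR. mm r)"
proof -
  have finP: "finite (PP v)" for v using finYY(3) unfolding PP_def by simp
  have per: "4 \<le> card (PP v) * amt v" if v: "v \<in> DP" for v
  proof -
    have "PP v \<noteq> {}"
    proof (cases "v \<in> YY")
      case True thus ?thesis using Pne v by blast
    next
      case False
      hence "v \<in> ZZ" using DP_sub v by blast
      thus ?thesis using s.Pne[of v] v unfolding sym_simps by blast
    qed
    hence "1 \<le> card (PP v)" using finP[of v] by (simp add: Suc_le_eq card_gt_0_iff)
    thus ?thesis unfolding amt_def by simp
  qed
  have eq: "card (PP v) * amt v = (\<Sum>r\<in>RR. if r \<in> PP v then amt v else 0)" for v
  proof -
    have "(\<Sum>r\<in>RR. if r \<in> PP v then amt v else 0) = sum (\<lambda>r. amt v) {r\<in>RR. r \<in> PP v}"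
      by (rule sum.inter_filter[OF finYY(3), symmetric])
    also have "{r\<in>RR. r \<in> PP v} = PP v" unfolding PP_def by blast
    finally show ?thesis by simp
  qed
  have "4 * card DP = (\<Sum>v\<in>DP. 4)" by simp
  also have "\<dots> \<le> (\<Sum>v\<in>DP. card (PP v) * amt v)" using per by (rule sum_mono)
  also have "\<dots> = (\<Sum>v\<in>DP. \<Sum>r\<in>RR. if r \<in> PP v then amt v else 0)" using eq by simp
  also have "\<dots> = (\<Sum>r\<in>RR. \<Sum>v\<in>DP. if r \<in> PP v then amt v else 0)" by (rule sum.swap)
  also have "\<dots> \<le> (\<Sum>r\<in>RR. 8 * mm r)" using load by (rule sum_mono)
  also have "\<dots> = 8 * (\<Sum>r\<in>RR. mm r)" by (simp add: sum_distrib_left)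
  finally show ?thesis .
qed

lemma D_card: "card Dd \<le> card N2 + 2 * (\<Sum>r\<in>RR. mm r)"
proof -
  have "Dd = DU \<union> DP" "DU \<inter> DP = {}" unfolding DP_def DU_def by auto
  hence "card Dd = card DU + card DP" using finDP by (simp add: card_Un_disjoint)
  thus ?thesis using DU_card DP_card by linarith
qed

lemma KEY: "card (YY \<union> ZZ) \<le> (\<Sum>w\<in>YY \<union> ZZ. mm w) + 2 * (\<Sum>r\<in>RR. mm r)"
proof -
  let ?Q = "YY \<union> ZZ"
  have finQ: "finite ?Q" using finYY by simp
  have pw: "1 + (if mm w = 2 then 1 else 0) \<le> mm w + (if mm w = 0 then 1 else (0::nat))" if "w \<in> ?Q" for w
  proof -
    have "mm w \<le> 2" using mm_le2 that YY_WW by blast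
    thus ?thesis by auto
  qed
  have c1: "card N2 = (\<Sum>w\<in>?Q. if mm w = 2 then 1 else 0)"
    unfolding N2_def using finQ by (simp add: sum.inter_filter[symmetric])
  have c2: "card Dd = (\<Sum>w\<in>?Q. if mm w = 0 then 1 else 0)"
    unfolding Dd_def using finQ by (simp add: sum.inter_filter[symmetric])
  have "card ?Q + card N2 = (\<Sum>w\<in>?Q. 1) + (\<Sum>w\<in>?Q. (if mm w = 2 then 1 else 0))"
    using c1 by simp
  also have "\<dots> = (\<Sum>w\<in>?Q. 1 + (if mm w = 2 then 1 else 0))"
    by (rule sum.distrib[symmetric])
  also have "\<dots> \<le> (\<Sum>w\<in>?Q. mm w + (if mm w = 0 then 1 else 0))" using pw by (rule sum_mono)
  also have "\<dots> = (\<Sum>w\<in>?Q. mm w) + (\<Sum>w\<in>?Q. if mm w = 0 then 1 else 0)"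
    by (rule sum.distrib)
  also have "\<dots> = (\<Sum>w\<in>?Q. mm w) + card Dd" using c2 by simp
  finally show ?thesis using D_card by linarith
qed

end

context K23L begin

lemma nbW_split: "nb WW w = nb YY w + nb ZZ w + nb RR w"
proof -
  have "{b\<in>WW. E w b} = ({b\<in>YY. E w b} \<union> {b\<in>ZZ. E w b}) \<union> {b\<in>RR. E w b}"
    using WW_split by blast
  moreover have "({b\<in>YY. E w b} \<union> {b\<in>ZZ. E w b}) \<inter> {b\<in>RR. E w b} = {}" using RR_disj by blast
  moreover have "{b\<in>YY. E w b} \<inter> {b\<in>ZZ. E w b} = {}" using YZ_disj by blast
  ultimately show ?thesis unfolding nb_def using finYY by (simp add: card_Un_disjoint)
qed

lemma swap_nb: assumes "finite A" "finite B" shows "(\<Sum>a\<in>A. nb B a) = (\<Sum>b\<in>B. nb A b)"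
proof -
  have "(\<Sum>a\<in>A. nb B a) = (\<Sum>a\<in>A. \<Sum>b\<in>B. if E a b then 1 else 0)" using nb_sum assms by simp
  also have "\<dots> = (\<Sum>b\<in>B. \<Sum>a\<in>A. if E a b then 1 else 0)" by (rule sum.swap)
  also have "\<dots> = (\<Sum>b\<in>B. \<Sum>a\<in>A. if E b a then 1 else 0)"
    by (rule sum.cong[OF refl], rule sum.cong[OF refl]) (metis symm)
  also have "\<dots> = (\<Sum>b\<in>B. nb A b)" using nb_sum assms by simp
  finally show ?thesis .
qed

lemma count: "2 * card WW \<le> card YY + card ZZ + card {{u, v} | u v. u \<in> WW \<and> v \<in> WW \<and> E u v}"
proof -
  let ?Q = "YY \<union> ZZ"
  let ?EW = "{{u, v} | u v. u \<in> WW \<and> v \<in> WW \<and> E u v}"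
  have finQ: "finite ?Q" using finYY by simp
  have "2 * card ?EW = (\<Sum>u\<in>WW. card {v\<in>WW. E u v})"
    by (rule handshake[OF finWW]) (use symm irr in blast)+
  hence hs: "2 * card ?EW = (\<Sum>w\<in>WW. nb WW w)" unfolding nb_def .
  have WQ: "WW = ?Q \<union> RR" "?Q \<inter> RR = {}" using WW_split RR_disj by auto
  have s1: "(\<Sum>w\<in>WW. nb WW w) = (\<Sum>w\<in>WW. nb YY w + nb ZZ w) + (\<Sum>w\<in>WW. nb RR w)"
    unfolding nbW_split by (simp add: sum.distrib)
  have s2: "(\<Sum>w\<in>WW. nb RR w) = (\<Sum>r\<in>RR. nb WW r)" using swap_nb finWW finYY(3) by blast
  have s3: "(\<Sum>r\<in>RR. nb WW r) \<ge> (\<Sum>r\<in>RR. nb YY r + nb ZZ r)"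
    unfolding nbW_split by (rule sum_mono) simp
  have s4: "(\<Sum>w\<in>WW. nb YY w + nb ZZ w) = (\<Sum>w\<in>?Q. nb YY w + nb ZZ w) + (\<Sum>w\<in>RR. nb YY w + nb ZZ w)"
    unfolding WQ(1) using finQ finYY(3) WQ(2) by (rule sum.union_disjoint)
  have s5: "(\<Sum>w\<in>?Q. nb YY w + nb ZZ w) + card ?Q = (\<Sum>w\<in>?Q. mm w) + 2 * card ?Q"
  proof -
    have "(\<Sum>w\<in>?Q. nb YY w + nb ZZ w + 1) = (\<Sum>w\<in>?Q. nb YY w + nb ZZ w) + (\<Sum>w\<in>?Q. 1)"
      by (rule sum.distrib)
    hence "(\<Sum>w\<in>?Q. nb YY w + nb ZZ w) + card ?Q = (\<Sum>w\<in>?Q. nb YY w + nb ZZ w + 1)"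
      by simp
    also have "\<dots> = (\<Sum>w\<in>?Q. mm w + 2)" using nb_YZ by (rule sum.cong[OF refl])
    also have "\<dots> = (\<Sum>w\<in>?Q. mm w) + 2 * card ?Q" by (subst sum.distrib) (simp add: mult.commute)
    finally show ?thesis .
  qed
  have s6: "(\<Sum>w\<in>RR. nb YY w + nb ZZ w) = (\<Sum>w\<in>RR. mm w) + 2 * card RR"
  proof -
    have "(\<Sum>w\<in>RR. nb YY w + nb ZZ w) = (\<Sum>w\<in>RR. mm w + 2)" using nb_R by (rule sum.cong[OF refl])
    also have "\<dots> = (\<Sum>w\<in>RR. mm w) + 2 * card RR" by (subst sum.distrib) (simp add: mult.commute)
    finally show ?thesis .
  qed
  have cW: "card WW = card ?Q + card RR" using WQ finQ finYY(3) by (simp add: card_Un_disjoint)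
  have cQ: "card ?Q = card YY + card ZZ" using YZ_disj finYY by (simp add: card_Un_disjoint)
  show ?thesis using hs s1 s2 s3 s4 s5 s6 cW cQ KEY by linarith
qed

lemma edges_ge: "3 + card YY + card ZZ + card {{u, v} | u v. u \<in> WW \<and> v \<in> WW \<and> E u v}
    \<le> card {{u, v} | u v. u \<in> V \<and> v \<in> V \<and> E u v}"
proof -
  define F where "F = {{u, v} | u v. u \<in> V \<and> v \<in> V \<and> E u v}"
  define EW where "EW = {{u, v} | u v. u \<in> WW \<and> v \<in> WW \<and> E u v}"
  define P0 where "P0 = {{x,y},{x,z},{y,z}}"
  define PY where "PY = (\<lambda>w. {y,w}) ` YY"
  define PZ where "PZ = (\<lambda>w. {z,w}) ` ZZ"
  have finF: "finite F"
  proof -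
    have "F \<subseteq> Pow V" unfolding F_def using inV by blast
    thus ?thesis using fin by (meson finite_Pow_iff finite_subset)
  qed
  have EWsub: "\<And>s. s \<in> EW \<Longrightarrow> s \<subseteq> WW" unfolding EW_def by blast
  have WWn: "x \<notin> WW" "y \<notin> WW" "z \<notin> WW" unfolding WW_def by auto
  have sub: "P0 \<union> PY \<union> PZ \<union> EW \<subseteq> F"
  proof -
    have "P0 \<subseteq> F" unfolding P0_def F_def using Exy Exz Eyz inVs by blast
    moreover have "PY \<subseteq> F" unfolding PY_def F_def YY_def using inVs WW_V by blast
    moreover have "PZ \<subseteq> F" unfolding PZ_def F_def ZZ_def using inVs WW_V by blast
    moreover have "EW \<subseteq> F" unfolding EW_def F_def using WW_V by blast
    ultimately show ?thesis by blast
  qed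
  have d1: "P0 \<inter> PY = {}"
  proof -
    have "\<And>s. s \<in> P0 \<Longrightarrow> s \<subseteq> {x,y,z}" unfolding P0_def by blast
    moreover have "\<And>s. s \<in> PY \<Longrightarrow> \<exists>w\<in>s. w \<notin> {x,y,z}" unfolding PY_def YY_def WW_def by blast
    ultimately show ?thesis by blast
  qed
  have d2: "(P0 \<union> PY) \<inter> PZ = {}"
  proof -
    have "\<And>s. s \<in> P0 \<Longrightarrow> s \<subseteq> {x,y,z}" unfolding P0_def by blast
    moreover have "\<And>s. s \<in> PZ \<Longrightarrow> \<exists>w\<in>s. w \<notin> {x,y,z}" unfolding PZ_def ZZ_def WW_def by blast
    moreover have "\<And>s. s \<in> PY \<Longrightarrow> z \<notin> s" unfolding PY_def using xy WWn YY_WW by blast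
    moreover have "\<And>s. s \<in> PZ \<Longrightarrow> z \<in> s" unfolding PZ_def by blast
    ultimately show ?thesis by blast
  qed
  have d3: "(P0 \<union> PY \<union> PZ) \<inter> EW = {}"
  proof -
    have "\<And>s. s \<in> P0 \<union> PY \<union> PZ \<Longrightarrow> \<exists>w\<in>s. w \<notin> WW" unfolding P0_def PY_def PZ_def using WWn by blast
    thus ?thesis using EWsub by blast
  qed
  have c0: "card P0 = 3" unfolding P0_def using xy by (simp add: doubleton_eq_iff)
  have cY: "card PY = card YY" unfolding PY_def
    by (rule card_image) (auto simp: inj_on_def doubleton_eq_iff)
  have cZ: "card PZ = card ZZ" unfolding PZ_def
    by (rule card_image) (auto simp: inj_on_def doubleton_eq_iff)
  have fins: "finite P0" "finite PY" "finite PZ" "finite EW"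
    using finF sub finite_subset by blast+
  have "card (P0 \<union> PY \<union> PZ \<union> EW) = 3 + card YY + card ZZ + card EW"
    using fins d1 d2 d3 c0 cY cZ by (simp add: card_Un_disjoint)
  moreover have "card (P0 \<union> PY \<union> PZ \<union> EW) \<le> card F" using card_mono[OF finF sub] .
  ultimately show ?thesis unfolding F_def EW_def by simp
qed

end



theorem lemma5p1:
  fixes V :: "'a set" and E :: "'a \<Rightarrow> 'a \<Rightarrow> bool" and n :: nat
  assumes "sat_graph_K23 n V E"
    and "min_degree V E = 2"
  defines "A \<equiv> {x \<in> V. degree V E x = 2 \<and> (\<forall>y z. E x y \<and> E x z \<and> y \<noteq> z \<longrightarrow> E y z)}"
    and "B \<equiv> {x \<in> V. degree V E x = 2 \<and> (\<forall>y z. E x y \<and> E x z \<and> y \<noteq> z \<longrightarrow>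
                 card {w \<in> V. E y w \<and> E z w} = 1)}"
  assumes "A \<inter> B \<noteq> {}"
  shows "int (num_edges V E) \<ge> 2 * int n - 3"
proof -
  have cV: "card V = n" and S: "K23_saturated V E" using assms(1) unfolding sat_graph_K23_def by auto
  have G: "graph V E" and nK: "\<not> has_K23 V E"
    and sat: "\<And>u v. u \<in> V \<Longrightarrow> v \<in> V \<Longrightarrow> u \<noteq> v \<Longrightarrow> \<not> E u v \<Longrightarrow> has_K23 V (add_edge E u v)"
    using S unfolding K23_saturated_def by blast+
  have fin: "finite V" and inV: "\<And>u v. E u v \<Longrightarrow> u \<in> V \<and> v \<in> V"
    and symm: "\<And>u v. E u v \<Longrightarrow> E v u" and irr: "\<And>u. \<not> E u u"
    using G unfolding graph_def by blast+
  obtain x where xA: "x \<in> A" and xB: "x \<in> B" using assms(5) by blast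
  have xV: "x \<in> V" and dx: "card {v\<in>V. E x v} = 2"
    and Acond: "\<And>y z. E x y \<Longrightarrow> E x z \<Longrightarrow> y \<noteq> z \<Longrightarrow> E y z"
    using xA unfolding A_def degree_def by blast+
  have Bcond: "\<And>y z. E x y \<Longrightarrow> E x z \<Longrightarrow> y \<noteq> z \<Longrightarrow> card {w \<in> V. E y w \<and> E z w} = 1"
    using xB unfolding B_def by blast
  obtain y z where yz: "{v\<in>V. E x v} = {y,z}" "y \<noteq> z" using dx card_2_iff by metis
  have Exy: "E x y" and Exz: "E x z" using yz(1) by blast+
  have Nx: "\<And>w. E x w \<Longrightarrow> w = y \<or> w = z"
  proof -
    fix w assume "E x w"
    hence "w \<in> {v\<in>V. E x v}" using inV by blast
    thus "w = y \<or> w = z" using yz(1) by blast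
  qed
  have Eyz: "E y z" using Acond[OF Exy Exz yz(2)] .
  have c1: "card {w \<in> V. E y w \<and> E z w} = 1" using Bcond[OF Exy Exz yz(2)] .
  have xin: "x \<in> {w \<in> V. E y w \<and> E z w}" using xV Exy Exz symm by blast
  have cyz: "\<And>w. E y w \<Longrightarrow> E z w \<Longrightarrow> w = x"
  proof -
    fix w assume "E y w" "E z w"
    hence "w \<in> {w \<in> V. E y w \<and> E z w}" using inV by blast
    moreover have "finite {w \<in> V. E y w \<and> E z w}" using fin by simp
    ultimately show "w = x" using xin c1 card_le_Suc0_iff_eq[of "{w \<in> V. E y w \<and> E z w}"] by simp
  qed
  interpret K: K23L V E x y z
    by unfold_locales (use fin inV symm irr nK sat Exy Exz Eyz Nx cyz in blast)+
  have e1: "2 * card K.WW \<le> card K.YY + card K.ZZ + card {{u, v} | u v. u \<in> K.WW \<and> v \<in> K.WW \<and> E u v}"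
    by (rule K.count)
  have e2: "3 + card K.YY + card K.ZZ + card {{u, v} | u v. u \<in> K.WW \<and> v \<in> K.WW \<and> E u v} \<le> num_edges V E"
    unfolding num_edges_def by (rule K.edges_ge)
  have "{x,y,z} \<subseteq> V" using K.inVs by blast
  moreover have "card {x,y,z} = 3" using K.xy by simp
  moreover have "3 \<le> n" using card_mono[OF fin calculation(1)] calculation(2) cV by simp
  ultimately have "card K.WW = n - 3" "3 \<le> n" unfolding K.WW_def using fin cV
    by (simp_all add: card_Diff_subset)
  thus ?thesis using e1 e2 by linarith
qed


end
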